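(* Let $(V,E,c,p)$ be a PCSTP instance with $s:=|T_p|\ge 3$, let $H$ be a terminal-regions decomposition, and enumerate $T_p=\{t_1,\dots,t_s\}$ so that $r^{pc}_H(t_1)\le\dots\le r^{pc}_H(t_s)$. Let $v_i\in V\setminus T_p$. If there is an optimal solution $S$ in which $v_i$ has degree at least $3$, then $$C(S)\ \ge\ \underline{d}(v_i,\bar v_{i,1})+\underline{d}(v_i,\bar v_{i,2})+\underline{d}(v_i,\bar v_{i,3})+\sum_{k=1}^{s-3} r^{pc}_H(t_k).$$
   Context: A PCSTP instance $(V,E,c,p)$: finite undirected connected graph $G=(V,E)$, $c:E\to\mathbb{Q}_{>0}$, $p:V\to\mathbb{Q}_{\ge0}$. For a tree $S\subseteq G$ (connected acyclic subgraph with at least one vertex), $C(S):=\sum_{e\in E(S)}c(e)+\sum_{v\in V\setminus V(S)}p(v)$; an optimal solution is a tree minimizing $C$. $T_p:=\{v\in V:p(v)>0\}$. $d(u,w)$ is the shortest-path distance in $G$ w.r.t. $c$. $\underline{d}(u,w)$ is the shortest-path distance between $u$ and $w$ in the subgraph induced by $V\setminus(T_p\setminus\{u,w\})$ ($+\infty$ if none). For $v_i\in V\setminus T_p$, $\bar v_{i,1},\bar v_{i,2},\dots$ denote the potential terminals ordered by nondecreasing $\underline{d}(v_i,\cdot)$ (ties broken arbitrarily). A terminal-regions decomposition is a partition $H=\{H_t:t\in T_p\}$ of $V$ with $H_t\cap T_p=\{t\}$ and each $H_t$ inducing a connected subgraph. For $t\in T_p$, $r^{pc}_H(t):=\min\{p(t),\min\{d(t,v):v\notin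 H_t\}\}$. *)

theory Defs
  imports "HOL-Library.Extended_Real"
begin

definition graph :: "'a set \<Rightarrow> 'a set set \<Rightarrow> bool" where
  "graph V E \<longleftrightarrow> finite V \<and> E \<subseteq> {{u, w} | u w. u \<in> V \<and> w \<in> V \<and> u \<noteq> w}"

definition walk :: "'a set set \<Rightarrow> 'a list \<Rightarrow> bool" where
  "walk ES xs \<longleftrightarrow> xs \<noteq> [] \<and> (\<forall>i < length xs - 1. {xs ! i, xs ! (i + 1)} \<in> ES)"

definition connected_sub :: "'a set \<Rightarrow> 'a set set \<Rightarrow> bool" where
  "connected_sub VS ES \<longleftrightarrow>
     (\<forall>u\<in>VS. \<forall>w\<in>VS. \<exists>xs. walk ES xs \<and> hd xs = u \<and> last xs = w \<and> set xs \<subseteq> VS)"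

definition has_cycle :: "'a set set \<Rightarrow> bool" where
  "has_cycle ES \<longleftrightarrow> (\<exists>xs. distinct xs \<and> length xs \<ge> 3 \<and> walk ES xs \<and> {last xs, hd xs} \<in> ES)"

definition is_subtree :: "'a set \<Rightarrow> 'a set set \<Rightarrow> 'a set \<Rightarrow> 'a set set \<Rightarrow> bool" where
  "is_subtree V E VS ES \<longleftrightarrow> VS \<noteq> {} \<and> VS \<subseteq> V \<and> ES \<subseteq> E \<and> (\<forall>e\<in>ES. e \<subseteq> VS)
     \<and> connected_sub VS ES \<and> \<not> has_cycle ES"

definition walk_cost :: "('a set \<Rightarrow> real) \<Rightarrow> 'a list \<Rightarrow> real" where
  "walk_cost c xs = sum_list (map (\<lambda>i. c {xs ! i, xs ! (i + 1)}) [0..<length xs - 1])"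

text \<open>Shortest-path distance between u and w in the subgraph of (V,E) induced by W
  (+\<infinity> if there is no path).\<close>
definition dist_in :: "'a set set \<Rightarrow> ('a set \<Rightarrow> real) \<Rightarrow> 'a set \<Rightarrow> 'a \<Rightarrow> 'a \<Rightarrow> ereal" where
  "dist_in E c W u w = Inf {ereal (walk_cost c xs) | xs.
      walk E xs \<and> distinct xs \<and> hd xs = u \<and> last xs = w \<and> set xs \<subseteq> W}"

definition dist :: "'a set \<Rightarrow> 'a set set \<Rightarrow> ('a set \<Rightarrow> real) \<Rightarrow> 'a \<Rightarrow> 'a \<Rightarrow> ereal" where
  "dist V E c u w = dist_in E c V u w"

definition Tp :: "'a set \<Rightarrow> ('a \<Rightarrow> real) \<Rightarrow> 'a set" where
  "Tp V p = {v \<in> V. p v > 0}"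

definition dlow :: "'a set \<Rightarrow> 'a set set \<Rightarrow> ('a set \<Rightarrow> real) \<Rightarrow> ('a \<Rightarrow> real) \<Rightarrow> 'a \<Rightarrow> 'a \<Rightarrow> ereal" where
  "dlow V E c p u w = dist_in E c (V - (Tp V p - {u, w})) u w"

definition pc_cost :: "'a set \<Rightarrow> ('a set \<Rightarrow> real) \<Rightarrow> ('a \<Rightarrow> real) \<Rightarrow> 'a set \<Rightarrow> 'a set set \<Rightarrow> real" where
  "pc_cost V c p VS ES = (\<Sum>e\<in>ES. c e) + (\<Sum>v\<in>V - VS. p v)"

definition pcstp_instance :: "'a set \<Rightarrow> 'a set set \<Rightarrow> ('a set \<Rightarrow> real) \<Rightarrow> ('a \<Rightarrow> real) \<Rightarrow> bool" where
  "pcstp_instance V E c p \<longleftrightarrow> graph V E \<and> V \<noteq> {} \<and> connected_sub V E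
     \<and> (\<forall>e\<in>E. c e > 0 \<and> c e \<in> \<rat>) \<and> (\<forall>v\<in>V. p v \<ge> 0 \<and> p v \<in> \<rat>)"

definition optimal_solution ::
  "'a set \<Rightarrow> 'a set set \<Rightarrow> ('a set \<Rightarrow> real) \<Rightarrow> ('a \<Rightarrow> real) \<Rightarrow> 'a set \<Rightarrow> 'a set set \<Rightarrow> bool" where
  "optimal_solution V E c p VS ES \<longleftrightarrow> is_subtree V E VS ES
     \<and> (\<forall>VS' ES'. is_subtree V E VS' ES' \<longrightarrow> pc_cost V c p VS ES \<le> pc_cost V c p VS' ES')"

definition terminal_regions :: "'a set \<Rightarrow> 'a set set \<Rightarrow> ('a \<Rightarrow> real) \<Rightarrow> ('a \<Rightarrow> 'a set) \<Rightarrow> bool" where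
  "terminal_regions V E p H \<longleftrightarrow>
     (\<Union>t\<in>Tp V p. H t) = V
     \<and> (\<forall>t\<in>Tp V p. \<forall>t'\<in>Tp V p. t \<noteq> t' \<longrightarrow> H t \<inter> H t' = {})
     \<and> (\<forall>t\<in>Tp V p. H t \<inter> Tp V p = {t} \<and> connected_sub (H t) {e \<in> E. e \<subseteq> H t})"

definition rpc :: "'a set \<Rightarrow> 'a set set \<Rightarrow> ('a set \<Rightarrow> real) \<Rightarrow> ('a \<Rightarrow> real) \<Rightarrow> ('a \<Rightarrow> 'a set) \<Rightarrow> 'a \<Rightarrow> ereal" where
  "rpc V E c p H t = min (ereal (p t)) (Inf {dist V E c t v | v. v \<in> V - H t})"

end

theory Submission
  imports Defs
begin

lemma walk_single[simp]: "walk ES [x]"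
  by (simp add: walk_def)

lemma walk_Cons2[simp]: "walk ES (x # y # xs) \<longleftrightarrow> {x, y} \<in> ES \<and> walk ES (y # xs)"
proof
  assume "walk ES (x # y # xs)"
  then have h: "\<forall>i < length xs + 1. {(x#y#xs) ! i, (x#y#xs) ! (i + 1)} \<in> ES" by (simp add: walk_def)
  from h[rule_format, of 0] have "{x,y} \<in> ES" by simp
  moreover have "walk ES (y # xs)" unfolding walk_def
  proof (intro conjI allI impI)
    fix i assume "i < length (y # xs) - 1"
    then show "{(y # xs) ! i, (y # xs) ! (i + 1)} \<in> ES" using h[rule_format, of "Suc i"] by simp
  qed simp
  ultimately show "{x, y} \<in> ES \<and> walk ES (y # xs)" by simp
next
  assume a: "{x, y} \<in> ES \<and> walk ES (y # xs)"
  show "walk ES (x # y # xs)" unfolding walk_def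
  proof (intro conjI allI impI)
    fix i assume i: "i < length (x # y # xs) - 1"
    show "{(x # y # xs) ! i, (x # y # xs) ! (i + 1)} \<in> ES"
    proof (cases i)
      case 0 then show ?thesis using a by simp
    next
      case (Suc j) then show ?thesis using a i by (simp add: walk_def)
    qed
  qed simp
qed

lemma walk_append:
  assumes "walk ES xs" "walk ES ys" "last xs = hd ys"
  shows "walk ES (xs @ tl ys)"
  using assms
proof (induction xs rule: induct_list012)
  case 1 then show ?case by (simp add: walk_def)
next
  case (2 x) then show ?case by (cases ys) auto
next
  case (3 x y zs)
  then show ?case by auto
qed

lemma walk_snoc: "walk ES xs \<Longrightarrow> {last xs, y} \<in> ES \<Longrightarrow> walk ES (xs @ [y])"
  using walk_append[of ES xs "[last xs, y]"] by simp

lemma walk_rev: "walk ES xs \<Longrightarrow> walk ES (rev xs)"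
proof (induction xs rule: induct_list012)
  case 1 then show ?case by (simp add: walk_def)
next
  case (2 x) then show ?case by simp
next
  case (3 x y zs)
  then have "walk ES (rev (y # zs))" by simp
  moreover have "last (rev (y#zs)) = y" by simp
  moreover have "{y, x} \<in> ES" using 3 by (simp add: insert_commute)
  ultimately have "walk ES (rev (y#zs) @ [x])" using walk_snoc by metis
  then show ?case by simp
qed

lemma walk_mono: "walk ES xs \<Longrightarrow> ES \<subseteq> ES' \<Longrightarrow> walk ES' xs"
  by (auto simp: walk_def)

lemma has_cycle_mono: "has_cycle ES \<Longrightarrow> ES \<subseteq> ES' \<Longrightarrow> has_cycle ES'"
  unfolding has_cycle_def using walk_mono by blast

lemma connected_via_root:
  assumes "v \<in> W" and "\<And>u. u \<in> W \<Longrightarrow> \<exists>xs. walk F xs \<and> hd xs = u \<and> last xs = v \<and> set xs \<subseteq> W"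
  shows "connected_sub W F"
  unfolding connected_sub_def
proof (intro ballI)
  fix u w assume u: "u \<in> W" and w: "w \<in> W"
  obtain xs where xs: "walk F xs" "hd xs = u" "last xs = v" "set xs \<subseteq> W" using assms(2)[OF u] by blast
  obtain ys where ys: "walk F ys" "hd ys = w" "last ys = v" "set ys \<subseteq> W" using assms(2)[OF w] by blast
  have ne: "xs \<noteq> []" "ys \<noteq> []" using xs ys by (auto simp: walk_def)
  have r: "walk F (rev ys)" using walk_rev ys by blast
  have "walk F (xs @ tl (rev ys))" using walk_append[OF xs(1) r] xs ys(3) ne by (simp add: hd_rev)
  moreover have "hd (xs @ tl (rev ys)) = u" using xs ne by simp
  moreover have "last (xs @ tl (rev ys)) = w"
  proof (cases "tl (rev ys) = []")
    case True
    then have "rev ys = [hd (rev ys)]" using ne by (metis list.collapse rev_is_Nil_conv)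
    then have "ys = [v]" using ys ne by (metis last_rev rev_singleton_conv)
    then show ?thesis using True xs ys by simp
  next
    case False
    then have "last (tl (rev ys)) = last (rev ys)" by (simp add: last_tl)
    then show ?thesis using False ys ne by (simp add: last_rev)
  qed
  moreover have "set (xs @ tl (rev ys)) \<subseteq> W"
  proof -
    have "set (tl (rev ys)) \<subseteq> set (rev ys)" by (cases "rev ys") auto
    then show ?thesis using xs ys by auto
  qed
  ultimately show "\<exists>zs. walk F zs \<and> hd zs = u \<and> last zs = w \<and> set zs \<subseteq> W" by blast
qed

lemma bfs_exists:
  assumes conn: "connected_sub VS ES" and vin: "v \<in> VS"
  shows "\<exists>dep par. dep v = (0::nat) \<and> par v = v
     \<and> (\<forall>u\<in>VS. u \<noteq> v \<longrightarrow> par u \<in> VS \<and> {u, par u} \<in> ES \<and> Suc (dep (par u)) = dep u)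
     \<and> (\<forall>u\<in>VS. \<forall>w\<in>VS. {u, w} \<in> ES \<longrightarrow> dep u \<le> Suc (dep w))"
proof -
  define R where "R u n \<longleftrightarrow> (\<exists>xs. walk ES xs \<and> hd xs = u \<and> last xs = v \<and> set xs \<subseteq> VS \<and> length xs = Suc n)" for u n
  define dep where "dep u = (LEAST n. R u n)" for u
  have Rex: "\<exists>n. R u n" if uV: "u \<in> VS" for u
  proof -
    obtain xs where xs: "walk ES xs" "hd xs = u" "last xs = v" "set xs \<subseteq> VS"
      using conn uV vin unfolding connected_sub_def by blast
    then have "xs \<noteq> []" by (simp add: walk_def)
    then have "length xs = Suc (length xs - 1)" by simp
    then show ?thesis using xs unfolding R_def by blast
  qed
  have Rdep: "R u (dep u)" if "u \<in> VS" for u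
    using Rex[OF that] unfolding dep_def by (rule LeastI_ex)
  have deple: "dep u \<le> n" if "R u n" for u n
    using that unfolding dep_def by (rule Least_le)
  have dv: "dep v = 0"
  proof -
    have "R v 0" unfolding R_def by (rule exI[of _ "[v]"]) (simp add: vin)
    then show ?thesis using deple by fastforce
  qed
  have nb: "dep u \<le> Suc (dep w)" if uw: "u \<in> VS" "w \<in> VS" "{u, w} \<in> ES" for u w
  proof -
    obtain xs where xs: "walk ES xs" "hd xs = w" "last xs = v" "set xs \<subseteq> VS" "length xs = Suc (dep w)"
      using Rdep[OF uw(2)] unfolding R_def by blast
    then obtain zs where zs: "xs = w # zs" by (cases xs) auto
    have "walk ES (u # xs)" using xs zs uw by simp
    moreover have "last (u # xs) = v" using xs zs by simp
    ultimately have "R u (Suc (dep w))" unfolding R_def using xs uw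
      by (intro exI[of _ "u # xs"]) auto
    then show ?thesis by (rule deple)
  qed
  have step: "\<exists>y. y \<in> VS \<and> {u, y} \<in> ES \<and> Suc (dep y) = dep u" if uv: "u \<in> VS" "u \<noteq> v" for u
  proof -
    obtain xs where xs: "walk ES xs" "hd xs = u" "last xs = v" "set xs \<subseteq> VS" "length xs = Suc (dep u)"
      using Rdep[OF uv(1)] unfolding R_def by blast
    obtain ys where ys: "xs = u # ys" using xs by (cases xs) auto
    have "ys \<noteq> []" using ys xs uv by auto
    then obtain y zs where yz: "ys = y # zs" by (cases ys) auto
    have e: "{u, y} \<in> ES" and w: "walk ES (y # zs)" using xs ys yz by auto
    have yv: "y \<in> VS" using xs ys yz by auto
    have "R y (dep u - 1)" unfolding R_def using xs ys yz w
      by (intro exI[of _ "y # zs"]) auto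
    then have "dep y \<le> dep u - 1" by (rule deple)
    moreover have "dep u \<le> Suc (dep y)" using nb[OF uv(1) yv e] .
    moreover have "dep u \<ge> 1" using xs ys yz by simp
    ultimately have "Suc (dep y) = dep u" by linarith
    then show ?thesis using yv e by blast
  qed
  define par where "par u = (if u = v then v else (SOME y. y \<in> VS \<and> {u, y} \<in> ES \<and> Suc (dep y) = dep u))" for u
  have "\<forall>u\<in>VS. u \<noteq> v \<longrightarrow> par u \<in> VS \<and> {u, par u} \<in> ES \<and> Suc (dep (par u)) = dep u"
  proof (intro ballI impI)
    fix u assume "u \<in> VS" "u \<noteq> v"
    then show "par u \<in> VS \<and> {u, par u} \<in> ES \<and> Suc (dep (par u)) = dep u"
      unfolding par_def using someI_ex[OF step] by simp
  qed
  moreover have "par v = v" by (simp add: par_def)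
  ultimately show ?thesis using dv nb by blast
qed

lemma walk_cost_sum: "walk_cost c xs = (\<Sum>i<length xs - 1. c {xs ! i, xs ! (i + 1)})"
  unfolding walk_cost_def by (simp add: sum_list_sum_nth atLeast0LessThan)

lemma walk_cost_rev: "walk_cost c (rev xs) = walk_cost c xs"
proof -
  let ?m = "length xs - 1"
  have "walk_cost c (rev xs) = (\<Sum>i<?m. c {rev xs ! i, rev xs ! (i + 1)})"
    by (simp add: walk_cost_sum)
  also have "\<dots> = (\<Sum>i<?m. (\<lambda>j. c {xs ! j, xs ! (j + 1)}) (?m - Suc i))"
  proof (rule sum.cong[OF refl])
    fix i assume i: "i \<in> {..<?m}"
    then have "rev xs ! i = xs ! (?m - Suc i + 1)" "rev xs ! (i+1) = xs ! (?m - Suc i)"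
    proof -
      have a: "length xs - Suc i = Suc (length xs - Suc (Suc i))" using i by auto
      show "rev xs ! i = xs ! (?m - Suc i + 1)" using i a by (auto simp: rev_nth)
      show "rev xs ! (i+1) = xs ! (?m - Suc i)" using i by (auto simp: rev_nth)
    qed
    then show "c {rev xs ! i, rev xs ! (i + 1)} = (\<lambda>j. c {xs ! j, xs ! (j + 1)}) (?m - Suc i)"
      by (simp add: insert_commute)
  qed
  also have "\<dots> = (\<Sum>j<?m. c {xs ! j, xs ! (j + 1)})" by (rule sum.nat_diff_reindex)
  also have "\<dots> = walk_cost c xs" by (simp add: walk_cost_sum)
  finally show ?thesis .
qed

locale ptree =
  fixes VS :: "'a set" and ES :: "'a set set" and v :: 'a and dep :: "'a \<Rightarrow> nat" and par :: "'a \<Rightarrow> 'a"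
  assumes v_in: "v \<in> VS" and dep_v: "dep v = 0" and par_v: "par v = v"
    and par_step: "\<And>u. u \<in> VS \<Longrightarrow> u \<noteq> v \<Longrightarrow> par u \<in> VS \<and> {u, par u} \<in> ES \<and> Suc (dep (par u)) = dep u"
    and dep_nb: "\<And>u w. u \<in> VS \<Longrightarrow> w \<in> VS \<Longrightarrow> {u, w} \<in> ES \<Longrightarrow> dep u \<le> Suc (dep w)"
begin

lemma dep_pos: "u \<in> VS \<Longrightarrow> u \<noteq> v \<Longrightarrow> dep u > 0"
  using par_step by fastforce

lemma dep0: "u \<in> VS \<Longrightarrow> dep u = 0 \<Longrightarrow> u = v"
  using dep_pos by fastforce

lemma iter: "u \<in> VS \<Longrightarrow> i \<le> dep u \<Longrightarrow> (par ^^ i) u \<in> VS \<and> dep ((par ^^ i) u) = dep u - i"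
proof (induction i)
  case 0 then show ?case by simp
next
  case (Suc i)
  then have IH: "(par ^^ i) u \<in> VS" "dep ((par ^^ i) u) = dep u - i" by auto
  then have "(par ^^ i) u \<noteq> v" using Suc.prems dep_v by auto
  then show ?case using par_step[OF IH(1)] IH Suc.prems by auto
qed

lemma iter_in: "u \<in> VS \<Longrightarrow> i \<le> dep u \<Longrightarrow> (par ^^ i) u \<in> VS"
  using iter by blast

lemma iter_dep: "u \<in> VS \<Longrightarrow> i \<le> dep u \<Longrightarrow> dep ((par ^^ i) u) = dep u - i"
  using iter by blast

lemma iter_top: "u \<in> VS \<Longrightarrow> (par ^^ dep u) u = v"
  using iter[of u "dep u"] dep0 by auto

lemma iter_ne: "u \<in> VS \<Longrightarrow> i < dep u \<Longrightarrow> (par ^^ i) u \<noteq> v"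
  using iter[of u i] dep_v by auto

lemma iter_edge: "u \<in> VS \<Longrightarrow> i < dep u \<Longrightarrow> {(par ^^ i) u, (par ^^ Suc i) u} \<in> ES"
  using par_step[of "(par ^^ i) u"] iter_in[of u i] iter_ne[of u i] by auto

lemma iter_add: "(par ^^ (i + j)) u = (par ^^ i) ((par ^^ j) u)"
  by (simp add: funpow_add)

lemma iter_inj: "u \<in> VS \<Longrightarrow> inj_on (\<lambda>i. (par ^^ i) u) {..dep u}"
  unfolding inj_on_def
proof (intro ballI impI)
  fix i j assume u: "u \<in> VS" and i: "i \<in> {..dep u}" and j: "j \<in> {..dep u}" and e: "(par ^^ i) u = (par ^^ j) u"
  then have "dep u - i = dep u - j" using iter_dep[of u i] iter_dep[of u j] by auto
  then show "i = j" using i j by auto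
qed

lemma edge_inj: "inj_on (\<lambda>x. {x, par x}) (VS - {v})"
  unfolding inj_on_def
proof (intro ballI impI)
  fix x y assume x: "x \<in> VS - {v}" and y: "y \<in> VS - {v}" and e: "{x, par x} = {y, par y}"
  show "x = y"
  proof (rule ccontr)
    assume "x \<noteq> y"
    then have "x = par y" "y = par x" using e by (auto simp: doubleton_eq_iff)
    then show False using par_step[of x] par_step[of y] x y by auto
  qed
qed

definition ch :: "'a \<Rightarrow> nat \<Rightarrow> 'a list" where
  "ch u j = map (\<lambda>i. (par ^^ i) u) [0..<Suc j]"

lemma ch_props:
  assumes u: "u \<in> VS" and j: "j \<le> dep u"
  shows "walk ES (ch u j)" "distinct (ch u j)" "hd (ch u j) = u" "last (ch u j) = (par ^^ j) u"
    "set (ch u j) = (\<lambda>i. (par ^^ i) u) ` {..j}"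
    "walk_cost c (ch u j) = (\<Sum>x\<in>(\<lambda>i. (par ^^ i) u) ` {..<j}. c {x, par x})"
proof -
  show "walk ES (ch u j)" unfolding walk_def ch_def
    using iter_edge[OF u] j by (auto simp del: upt_Suc simp add: nth_append)
  show "distinct (ch u j)" unfolding ch_def distinct_map
    using iter_inj[OF u] j by (auto simp del: upt_Suc intro: inj_on_subset)
  show "hd (ch u j) = u" unfolding ch_def by (simp del: upt_Suc add: hd_map)
  show "last (ch u j) = (par ^^ j) u" unfolding ch_def by (simp add: last_map)
  show "set (ch u j) = (\<lambda>i. (par ^^ i) u) ` {..j}" unfolding ch_def
    by (auto simp del: upt_Suc simp add: atLeast0LessThan lessThan_Suc_atMost)
  have "walk_cost c (ch u j) = (\<Sum>i<j. c {(par ^^ i) u, (par ^^ Suc i) u})"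
    by (simp add: walk_cost_sum ch_def del: upt_Suc)
  also have "\<dots> = (\<Sum>i<j. (\<lambda>x. c {x, par x}) ((par ^^ i) u))" by simp
  also have "\<dots> = (\<Sum>x\<in>(\<lambda>i. (par ^^ i) u) ` {..<j}. c {x, par x})"
    by (rule sum.reindex[symmetric, unfolded comp_def]) (use iter_inj[OF u] j in \<open>auto intro: inj_on_subset\<close>)
  finally show "walk_cost c (ch u j) = (\<Sum>x\<in>(\<lambda>i. (par ^^ i) u) ` {..<j}. c {x, par x})" .
qed

end

lemma walk_restrict: "walk ES xs \<Longrightarrow> set xs \<subseteq> W \<Longrightarrow> walk {e \<in> ES. e \<subseteq> W} xs"
  unfolding walk_def
proof (intro conjI allI impI)
  fix i assume a: "xs \<noteq> [] \<and> (\<forall>i<length xs - 1. {xs ! i, xs ! (i + 1)} \<in> ES)" "set xs \<subseteq> W"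
    and i: "i < length xs - 1"
  have "xs ! i \<in> W" "xs ! (i+1) \<in> W" using a(2) i by (auto dest!: nth_mem[of _ xs])
  then show "{xs ! i, xs ! (i + 1)} \<in> {e \<in> ES. e \<subseteq> W}" using a i by auto
qed auto

context ptree begin

definition br :: "'a \<Rightarrow> 'a" where "br u = (par ^^ (dep u - 1)) u"
definition C :: "'a \<Rightarrow> 'a set" where "C u = (\<lambda>i. (par ^^ i) u) ` {..<dep u}"

lemma br_iter: "u \<in> VS \<Longrightarrow> i < dep u \<Longrightarrow> br ((par ^^ i) u) = br u"
proof -
  assume u: "u \<in> VS" and i: "i < dep u"
  have "br ((par ^^ i) u) = (par ^^ (dep u - i - 1)) ((par ^^ i) u)"
    unfolding br_def using iter_dep[OF u, of i] i by simp
  also have "\<dots> = (par ^^ (dep u - i - 1 + i)) u" by (simp add: iter_add)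
  also have "dep u - i - 1 + i = dep u - 1" using i by simp
  finally show ?thesis by (simp add: br_def)
qed

lemma C_sub: "u \<in> VS \<Longrightarrow> C u \<subseteq> VS - {v}"
  unfolding C_def using iter_in iter_ne by fastforce

lemma C_br: "u \<in> VS \<Longrightarrow> z \<in> C u \<Longrightarrow> br z = br u"
  unfolding C_def using br_iter by auto

lemma C_fin: "finite (C u)" unfolding C_def by simp

lemma br_child: "u \<in> VS \<Longrightarrow> u \<noteq> v \<Longrightarrow> br u \<in> VS \<and> br u \<noteq> v \<and> {v, br u} \<in> ES \<and> dep (br u) = 1 \<and> par (br u) = v"
proof -
  assume u: "u \<in> VS" and uv: "u \<noteq> v"
  then have dp: "dep u > 0" using dep_pos by blast
  let ?x = "br u"
  have x: "?x \<in> VS" "dep ?x = 1" unfolding br_def using iter[OF u, of "dep u - 1"] dp by auto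
  then have xv: "?x \<noteq> v" using dep_v by auto
  then have "par ?x \<in> VS" "{?x, par ?x} \<in> ES" "Suc (dep (par ?x)) = dep ?x" using par_step[OF x(1)] by auto
  then have "par ?x = v" using dep0 x by auto
  then show ?thesis using x xv \<open>{?x, par ?x} \<in> ES\<close> by (auto simp: insert_commute)
qed

lemma child_props: "w \<in> VS \<Longrightarrow> w \<noteq> v \<Longrightarrow> {v, w} \<in> ES \<Longrightarrow> dep w = 1 \<and> par w = v \<and> br w = w"
proof -
  assume w: "w \<in> VS" "w \<noteq> v" "{v, w} \<in> ES"
  have "dep w \<le> 1" using dep_nb[OF w(1) v_in] w(3) dep_v by (auto simp: insert_commute)
  moreover have "dep w > 0" using dep_pos w by auto
  ultimately have d: "dep w = 1" by simp
  then have "par w = v" using par_step[OF w(1) w(2)] dep0 by auto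
  then show ?thesis using d by (simp add: br_def)
qed

end

context ptree begin

lemma branch_has_terminal:
  assumes opt: "optimal_solution V E c p VS ES" and cpos: "\<forall>e\<in>E. c e > 0" and pnn: "\<forall>x\<in>V. p x \<ge> 0"
    and finV: "finite V" and finES: "finite ES"
    and w: "w \<in> VS" "w \<noteq> v" "{v, w} \<in> ES"
  shows "\<exists>t\<in>VS. t \<noteq> v \<and> br t = w \<and> t \<in> Tp V p"
proof (rule ccontr)
  assume nt: "\<not> ?thesis"
  define D where "D = {u \<in> VS. u \<noteq> v \<and> br u = w}"
  define VS' where "VS' = VS - D"
  define ES' where "ES' = {e \<in> ES. e \<subseteq> VS'}"
  have sub: "is_subtree V E VS ES" using opt by (simp add: optimal_solution_def)
  then have VSV: "VS \<subseteq> V" and ESE: "ES \<subseteq> E" and ncyc: "\<not> has_cycle ES"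
    by (auto simp: is_subtree_def)
  have wD: "w \<in> D" using child_props[OF w] w unfolding D_def by auto
  have vVS': "v \<in> VS'" unfolding VS'_def D_def using v_in by auto
  have chain_in: "set (ch u (dep u)) \<subseteq> VS'" if u: "u \<in> VS'" for u
  proof
    fix x assume "x \<in> set (ch u (dep u))"
    then obtain i where i: "i \<le> dep u" "x = (par ^^ i) u" using ch_props(5)[of u "dep u"] u
      unfolding VS'_def by auto
    have uV: "u \<in> VS" using u unfolding VS'_def by auto
    have xV: "x \<in> VS" using iter_in[OF uV i(1)] i by simp
    show "x \<in> VS'"
    proof (cases "i = dep u")
      case True then have "x = v" using iter_top[OF uV] i by simp
      then show ?thesis using vVS' by simp
    next
      case False
      then have il: "i < dep u" using i by simp
      then have "br x = br u" using br_iter[OF uV il] i by simp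
      moreover have "u \<noteq> v" using il dep_v by auto
      ultimately have "x \<notin> D" using u unfolding VS'_def D_def by auto
      then show ?thesis using xV unfolding VS'_def by simp
    qed
  qed
  have sub': "is_subtree V E VS' ES'"
    unfolding is_subtree_def
  proof (intro conjI)
    show "VS' \<noteq> {}" using vVS' by auto
    show "VS' \<subseteq> V" using VSV unfolding VS'_def by auto
    show "ES' \<subseteq> E" using ESE unfolding ES'_def by auto
    show "\<forall>e\<in>ES'. e \<subseteq> VS'" unfolding ES'_def by auto
    show "\<not> has_cycle ES'" using ncyc has_cycle_mono[of ES' ES] unfolding ES'_def by auto
    show "connected_sub VS' ES'"
    proof (rule connected_via_root[OF vVS'])
      fix u assume u: "u \<in> VS'"
      then have uV: "u \<in> VS" unfolding VS'_def by auto
      have "walk ES' (ch u (dep u))" unfolding ES'_def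
        using walk_restrict[OF ch_props(1)[OF uV order.refl] chain_in[OF u]] .
      then show "\<exists>xs. walk ES' xs \<and> hd xs = u \<and> last xs = v \<and> set xs \<subseteq> VS'"
        using ch_props(3,4)[OF uV order.refl] iter_top[OF uV] chain_in[OF u] by metis
    qed
  qed
  have cES: "\<forall>e\<in>ES. c e \<ge> 0" using cpos ESE by fastforce
  have "(\<Sum>e\<in>ES'. c e) \<le> (\<Sum>e\<in>ES - {{v, w}}. c e)"
  proof (rule sum_mono2)
    show "finite (ES - {{v, w}})" using finES by simp
    show "ES' \<subseteq> ES - {{v, w}}" using wD unfolding ES'_def VS'_def by auto
    show "\<And>b. b \<in> ES - {{v, w}} - ES' \<Longrightarrow> 0 \<le> c b" using cES by auto
  qed
  also have "\<dots> = (\<Sum>e\<in>ES. c e) - c {v, w}" using finES w(3) by (simp add: sum_diff1)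
  also have "\<dots> < (\<Sum>e\<in>ES. c e)" using cpos ESE w(3) by auto
  finally have lessE: "(\<Sum>e\<in>ES'. c e) < (\<Sum>e\<in>ES. c e)" .
  have DVS: "D \<subseteq> VS" unfolding D_def by auto
  have pD: "\<forall>x\<in>D. p x = 0"
  proof
    fix x assume x: "x \<in> D"
    then have "x \<notin> Tp V p" using nt unfolding D_def by auto
    moreover have "x \<in> V" using x DVS VSV by auto
    ultimately show "p x = 0" using pnn unfolding Tp_def by force
  qed
  have "V - VS' = (V - VS) \<union> D" using DVS VSV unfolding VS'_def by auto
  then have "(\<Sum>x\<in>V - VS'. p x) = (\<Sum>x\<in>V - VS. p x) + (\<Sum>x\<in>D. p x)"
  proof -
    have f1: "finite D" using finV DVS VSV by (meson finite_subset order_trans)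
    have f2: "finite (V - VS)" using finV by simp
    have f3: "(V - VS) \<inter> D = {}" using DVS by blast
    have "(\<Sum>x\<in>(V - VS) \<union> D. p x) = (\<Sum>x\<in>V - VS. p x) + (\<Sum>x\<in>D. p x)"
      by (rule sum.union_disjoint[OF f2 f1 f3])
    then show ?thesis using \<open>V - VS' = (V - VS) \<union> D\<close> by simp
  qed
  also have "(\<Sum>x\<in>D. p x) = 0" using pD by simp
  finally have eqP: "(\<Sum>x\<in>V - VS'. p x) = (\<Sum>x\<in>V - VS. p x)" by simp
  have "pc_cost V c p VS' ES' < pc_cost V c p VS ES"
    unfolding pc_cost_def using lessE eqP by simp
  moreover have "pc_cost V c p VS ES \<le> pc_cost V c p VS' ES'"
    using opt sub' unfolding optimal_solution_def by blast
  ultimately show False by simp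
qed

end

locale ptreeH = ptree +
  fixes H :: "'a \<Rightarrow> 'a set" and T :: "'a set"
  assumes T_sub: "T \<subseteq> VS" and v_notin_T: "v \<notin> T"
    and t_in_H: "\<And>t. t \<in> T \<Longrightarrow> t \<in> H t"
    and H_disj: "\<And>t t'. t \<in> T \<Longrightarrow> t' \<in> T \<Longrightarrow> t \<noteq> t' \<Longrightarrow> H t \<inter> H t' = {}"
begin

definition U :: "'a \<Rightarrow> 'a set" where
  "U t = {(par ^^ i) t | i. i < dep t \<and> (\<forall>i'\<le>i. (par ^^ i') t \<in> H t)}"

definition F :: "'a \<Rightarrow> 'a set" where
  "F a = {z \<in> C a. \<exists>t\<in>T. t \<noteq> a \<and> z \<in> U t}"

definition good :: "'a \<Rightarrow> bool" where
  "good t \<longleftrightarrow> (\<exists>j\<le>dep t. (par ^^ j) t \<notin> H t)"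

lemma U_idx:
  assumes t: "t \<in> VS" and i: "i < dep t"
  shows "(par ^^ i) t \<in> U t \<longleftrightarrow> (\<forall>i'\<le>i. (par ^^ i') t \<in> H t)"
proof
  assume "(par ^^ i) t \<in> U t"
  then obtain k where k: "(par ^^ i) t = (par ^^ k) t" "k < dep t" "\<forall>i'\<le>k. (par ^^ i') t \<in> H t"
    unfolding U_def by auto
  have "i = k" using iter_inj[OF t] k i unfolding inj_on_def by auto
  then show "\<forall>i'\<le>i. (par ^^ i') t \<in> H t" using k by simp
next
  assume "\<forall>i'\<le>i. (par ^^ i') t \<in> H t"
  then show "(par ^^ i) t \<in> U t" using i unfolding U_def by blast
qed

lemma U_sub_H: "U t \<subseteq> H t"
  unfolding U_def by auto

lemma U_sub_C: "U t \<subseteq> C t"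
  unfolding U_def C_def by auto

lemma in_H_unique: "t \<in> T \<Longrightarrow> t' \<in> T \<Longrightarrow> x \<in> H t \<Longrightarrow> x \<in> H t' \<Longrightarrow> t = t'"
  using H_disj by blast

lemma U_disj: "t \<in> T \<Longrightarrow> t' \<in> T \<Longrightarrow> t \<noteq> t' \<Longrightarrow> U t \<inter> U t' = {}"
  using H_disj U_sub_H by blast

lemma bad_v: "t \<in> T \<Longrightarrow> \<not> good t \<Longrightarrow> v \<in> H t"
  unfolding good_def using iter_top[of t] T_sub by (metis order.refl subsetD)

lemma bad_unique: "t \<in> T \<Longrightarrow> t' \<in> T \<Longrightarrow> \<not> good t \<Longrightarrow> \<not> good t' \<Longrightarrow> t = t'"
  using bad_v in_H_unique by blast

lemma bad_F: "t \<in> T \<Longrightarrow> \<not> good t \<Longrightarrow> F t = {}"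
proof -
  assume t: "t \<in> T" and b: "\<not> good t"
  have "C t \<subseteq> H t" using b unfolding good_def C_def by auto
  then show "F t = {}" unfolding F_def using U_sub_H in_H_unique t by blast
qed

lemma F_fin: "finite (F a)"
  unfolding F_def using C_fin by simp

lemma F_dec:
  assumes a: "a \<in> T" and z: "z \<in> F a"
  shows "\<exists>t\<in>T. t \<noteq> a \<and> F t \<subseteq> F a - {z} \<and> br t = br a \<and> good a"
proof -
  have aV: "a \<in> VS" using a T_sub by auto
  obtain k where k: "k < dep a" "z = (par ^^ k) a" using z unfolding F_def C_def by auto
  obtain t where t: "t \<in> T" "t \<noteq> a" "z \<in> U t" using z unfolding F_def by auto
  have tV: "t \<in> VS" using t T_sub by auto
  obtain m where m: "m < dep t" "z = (par ^^ m) t" "\<forall>i'\<le>m. (par ^^ i') t \<in> H t"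
    using t(3) unfolding U_def by auto
  have brt: "br t = br a" using br_iter[OF tV m(1)] br_iter[OF aV k(1)] m(2) k(2) by simp
  have zHt: "z \<in> H t" using t(3) U_sub_H by auto
  have ga: "good a"
  proof (rule ccontr)
    assume "\<not> good a" then have "F a = {}" using bad_F a by simp
    then show False using z by simp
  qed
  have depz: "dep z = dep t - m" "dep z = dep a - k" using iter_dep[OF tV, of m] iter_dep[OF aV, of k] m k by auto
  have "F t \<subseteq> F a - {z}"
  proof
    fix y assume y: "y \<in> F t"
    obtain i where i: "i < dep t" "y = (par ^^ i) t" using y unfolding F_def C_def by auto
    obtain t' where t': "t' \<in> T" "t' \<noteq> t" "y \<in> U t'" using y unfolding F_def by auto
    have yHt': "y \<in> H t'" using t'(3) U_sub_H by auto
    have im: "i > m"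
    proof (rule ccontr)
      assume "\<not> i > m" then have "y \<in> H t" using m(3) i(2) by auto
      then show False using in_H_unique[OF t(1) t'(1) _ yHt'] t'(2) by auto
    qed
    have y2: "y = (par ^^ (i - m + k)) a"
    proof -
      have "y = (par ^^ (i - m)) ((par ^^ m) t)" using i(2) im iter_add[of "i - m" m t] by simp
      also have "\<dots> = (par ^^ (i - m)) ((par ^^ k) a)" using m(2) k(2) by simp
      also have "\<dots> = (par ^^ (i - m + k)) a" by (simp add: iter_add)
      finally show ?thesis .
    qed
    have ilt: "i - m + k < dep a" using i(1) im depz k(1) m(1) by linarith
    have yC: "y \<in> C a" unfolding C_def using y2 ilt by auto
    have t'a: "t' \<noteq> a"
    proof
      assume "t' = a"
      then have "y \<in> U a" using t'(3) by simp
      then have "\<forall>i'\<le>i - m + k. (par ^^ i') a \<in> H a" using U_idx[OF aV ilt] y2 by simp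
      then have "z \<in> H a" using k(2) by auto
      then show False using in_H_unique[OF a t(1) _ zHt] t(2) by auto
    qed
    have "y \<noteq> z"
    proof
      assume "y = z"
      then have "dep y = dep z" by simp
      moreover have "dep y = dep t - i" using iter_dep[OF tV, of i] i by simp
      ultimately show False using depz im i(1) by linarith
    qed
    then show "y \<in> F a - {z}" using yC t' t'a unfolding F_def by auto
  qed
  then show ?thesis using t brt ga by blast
qed

lemma F_empty_noterm: "a \<in> T \<Longrightarrow> F a = {} \<Longrightarrow> z \<in> C a \<Longrightarrow> z \<noteq> a \<Longrightarrow> z \<notin> T"
proof
  assume a: "a \<in> T" and F: "F a = {}" and z: "z \<in> C a" "z \<noteq> a" "z \<in> T"
  have zV: "z \<in> VS" using z T_sub by auto
  have "dep z > 0" using dep_pos[OF zV] z(3) v_notin_T by auto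
  then have "(par ^^ 0) z \<in> U z" using U_idx[OF zV, of 0] t_in_H[OF z(3)] by simp
  then have "z \<in> F a" unfolding F_def using z by auto
  then show False using F by simp
qed

lemma CU_disj: "F a = {} \<Longrightarrow> t \<in> T \<Longrightarrow> t \<noteq> a \<Longrightarrow> C a \<inter> U t = {}"
  unfolding F_def by blast

lemma CC_disj: "a \<in> VS \<Longrightarrow> b \<in> VS \<Longrightarrow> br a \<noteq> br b \<Longrightarrow> C a \<inter> C b = {}"
proof (rule ccontr)
  assume "a \<in> VS" "b \<in> VS" "br a \<noteq> br b" "C a \<inter> C b \<noteq> {}"
  then obtain z where "z \<in> C a" "z \<in> C b" by blast
  then show False using C_br \<open>a \<in> VS\<close> \<open>b \<in> VS\<close> \<open>br a \<noteq> br b\<close> by metis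
qed

end

context ptreeH begin

lemma good_sum:
  assumes t: "t \<in> T" and g: "good t" and ESE: "ES \<subseteq> E" and VSV: "VS \<subseteq> V"
  shows "\<exists>x\<in>V - H t. dist V E c t x \<le> ereal (\<Sum>y\<in>U t. c {y, par y})"
proof -
  have tV: "t \<in> VS" using t T_sub by auto
  obtain j where j: "j \<le> dep t" "(par ^^ j) t \<notin> H t" using g unfolding good_def by auto
  define j0 where "j0 = (LEAST j. (par ^^ j) t \<notin> H t)"
  have j0j: "j0 \<le> j" unfolding j0_def using j(2) by (rule Least_le)
  then have j0d: "j0 \<le> dep t" using j by simp
  have nH: "(par ^^ j0) t \<notin> H t" unfolding j0_def using j(2) by (rule LeastI)
  have below: "(par ^^ i) t \<in> H t" if "i < j0" for i
    using not_less_Least[of i "\<lambda>j. (par ^^ j) t \<notin> H t"] that unfolding j0_def by blast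
  have Ueq: "U t = (\<lambda>i. (par ^^ i) t) ` {..<j0}"
  proof
    show "U t \<subseteq> (\<lambda>i. (par ^^ i) t) ` {..<j0}"
    proof
      fix x assume "x \<in> U t"
      then obtain i where i: "x = (par ^^ i) t" "i < dep t" "\<forall>i'\<le>i. (par ^^ i') t \<in> H t"
        unfolding U_def by auto
      have "i < j0"
      proof (rule ccontr)
        assume "\<not> i < j0" then have "(par ^^ j0) t \<in> H t" using i(3) by simp
        then show False using nH by simp
      qed
      then show "x \<in> (\<lambda>i. (par ^^ i) t) ` {..<j0}" using i by auto
    qed
  next
    show "(\<lambda>i. (par ^^ i) t) ` {..<j0} \<subseteq> U t"
    proof
      fix x assume "x \<in> (\<lambda>i. (par ^^ i) t) ` {..<j0}"
      then obtain i where i: "x = (par ^^ i) t" "i < j0" by auto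
      have "\<forall>i'\<le>i. (par ^^ i') t \<in> H t" using below i(2) by auto
      moreover have "i < dep t" using i(2) j0d by simp
      ultimately show "x \<in> U t" using i unfolding U_def by blast
    qed
  qed
  let ?xs = "ch t j0"
  have cost: "walk_cost c ?xs = (\<Sum>y\<in>U t. c {y, par y})" using ch_props(6)[OF tV j0d] Ueq by simp
  have wE: "walk E ?xs" using walk_mono[OF ch_props(1)[OF tV j0d] ESE] .
  have setV: "set ?xs \<subseteq> V" using ch_props(5)[OF tV j0d] iter_in[OF tV] j0d VSV by auto
  have xV: "(par ^^ j0) t \<in> V" using iter_in[OF tV j0d] VSV by auto
  have "dist V E c t ((par ^^ j0) t) \<le> ereal (walk_cost c ?xs)"
    unfolding dist_def dist_in_def
    by (rule Inf_lower) (use wE ch_props(2,3,4)[OF tV j0d] setV in blast)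
  then show ?thesis using cost xV nH by auto
qed

lemma dlow_sum:
  assumes a: "a \<in> T" and Fa: "F a = {}" and TP: "T = TP \<inter> VS" and vTP: "v \<notin> TP"
    and ESE: "ES \<subseteq> E" and VSV: "VS \<subseteq> V"
  shows "dist_in E c (V - (TP - {v, a})) v a \<le> ereal (\<Sum>x\<in>C a. c {x, par x})"
proof -
  have aV: "a \<in> VS" using a T_sub by auto
  let ?ys = "ch a (dep a)"
  let ?xs = "rev ?ys"
  have wE: "walk E ?xs" using walk_rev[OF walk_mono[OF ch_props(1)[OF aV order.refl] ESE]] .
  have dis: "distinct ?xs" using ch_props(2)[OF aV order.refl] by simp
  have ne: "?ys \<noteq> []" unfolding ch_def by simp
  have hd: "hd ?xs = v" using ch_props(4)[OF aV order.refl] iter_top[OF aV] ne by (simp add: hd_rev)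
  have lst: "last ?xs = a" using ch_props(3)[OF aV order.refl] ne by (simp add: last_rev)
  have setW: "set ?xs \<subseteq> V - (TP - {v, a})"
  proof
    fix x assume "x \<in> set ?xs"
    then obtain i where i: "i \<le> dep a" "x = (par ^^ i) a" using ch_props(5)[OF aV order.refl] by auto
    have xV: "x \<in> V" using iter_in[OF aV i(1)] i VSV by auto
    show "x \<in> V - (TP - {v, a})"
    proof (cases "i = dep a \<or> i = 0")
      case True then have "x = v \<or> x = a" using iter_top[OF aV] i by auto
      then show ?thesis using xV by auto
    next
      case False
      then have il: "i < dep a" "i \<noteq> 0" using i by auto
      have xC: "x \<in> C a" unfolding C_def using i il by auto
      have "x \<noteq> a"
      proof
        assume "x = a"
        then have "(par ^^ i) a = (par ^^ 0) a" using i by simp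
        then show False using iter_inj[OF aV] il unfolding inj_on_def by fastforce
      qed
      then have "x \<notin> T" using F_empty_noterm[OF a Fa xC] by simp
      moreover have "x \<in> VS" using iter_in[OF aV i(1)] i by simp
      ultimately have "x \<notin> TP" using TP by auto
      then show ?thesis using xV by auto
    qed
  qed
  have cost: "walk_cost c ?xs = (\<Sum>x\<in>C a. c {x, par x})"
    using walk_cost_rev[of c ?ys] ch_props(6)[OF aV order.refl, of c] unfolding C_def by simp
  show ?thesis unfolding dist_in_def
    by (rule Inf_lower) (use wE dis hd lst setW cost in force)
qed

end

lemma sorted_sum:
  fixes f :: "nat \<Rightarrow> ereal"
  assumes mono: "\<And>i j. 1 \<le> i \<Longrightarrow> i \<le> j \<Longrightarrow> j \<le> n \<Longrightarrow> f i \<le> f j" and K: "K \<subseteq> {1..n}"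
  shows "(\<Sum>k=1..card K. f k) \<le> sum f K"
  using assms
proof (induction n arbitrary: K)
  case 0
  then have "K = {}" by auto
  then show ?case by simp
next
  case (Suc n)
  have mono': "\<And>i j. 1 \<le> i \<Longrightarrow> i \<le> j \<Longrightarrow> j \<le> n \<Longrightarrow> f i \<le> f j" using Suc.prems(1) by simp
  show ?case
  proof (cases "Suc n \<in> K")
    case False
    then have "K \<subseteq> {1..n}" using Suc.prems(2) by (auto simp: le_Suc_eq)
    then show ?thesis using Suc.IH[OF mono'] by blast
  next
    case True
    define K' where "K' = K - {Suc n}"
    have K': "K' \<subseteq> {1..n}" using Suc.prems(2) unfolding K'_def by (auto simp: le_Suc_eq)
    have finK: "finite K" using Suc.prems(2) finite_subset by blast
    have cK: "card K = Suc (card K')" unfolding K'_def using True finK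
      by (metis card_Suc_Diff1)
    have cK'le: "card K' \<le> n" using card_mono[OF _ K'] by simp
    have "sum f K = f (Suc n) + sum f K'" unfolding K'_def using True finK by (simp add: sum.remove)
    moreover have "(\<Sum>k=1..card K'. f k) \<le> sum f K'" using Suc.IH[OF mono' K'] .
    moreover have "f (Suc (card K')) \<le> f (Suc n)" using Suc.prems(1)[of "Suc (card K')" "Suc n"] cK'le by simp
    moreover have "(\<Sum>k=1..card K. f k) = f (Suc (card K')) + (\<Sum>k=1..card K'. f k)"
      using cK by (simp add: add.commute)
    ultimately show ?thesis by (simp add: add_mono)
  qed
qed

lemma bij_reindex:
  assumes bij: "bij_betw f {1..s} TT" and B: "B \<subseteq> TT"
  shows "\<exists>K \<subseteq> {1..s::nat}. card K = card B \<and> sum g B = sum (g \<circ> f) K"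
proof -
  define K where "K = {k \<in> {1..s}. f k \<in> B}"
  have Ks: "K \<subseteq> {1..s}" unfolding K_def by blast
  have img: "f ` K = B"
  proof
    show "f ` K \<subseteq> B" unfolding K_def by blast
    show "B \<subseteq> f ` K"
    proof
      fix b assume b: "b \<in> B"
      then have "b \<in> f ` {1..s}" using B bij unfolding bij_betw_def by blast
      then obtain k where "k \<in> {1..s}" "f k = b" by blast
      then show "b \<in> f ` K" unfolding K_def using b by blast
    qed
  qed
  have inj: "inj_on f K" using inj_on_subset[OF _ Ks] bij unfolding bij_betw_def by blast
  have "card K = card B" using card_image[OF inj] unfolding img by simp
  moreover have "sum g B = sum (g \<circ> f) K"
  proof -
    have "sum g (f ` K) = sum (g \<circ> f) K" by (rule sum.reindex[OF inj])
    then show ?thesis unfolding img .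
  qed
  ultimately show ?thesis using Ks by blast
qed

lemma two_elems: "2 \<le> card A \<Longrightarrow> \<exists>x y. x \<in> A \<and> y \<in> A \<and> x \<noteq> y"
proof -
  assume "2 \<le> card A"
  then obtain B where B: "B \<subseteq> A" "card B = 2" using obtain_subset_with_card_n by metis
  then obtain x y where "B = {x, y}" "x \<noteq> y" unfolding card_2_iff by blast
  then show ?thesis using B(1) by blast
qed

lemma three_elems: "3 \<le> card A \<Longrightarrow> \<exists>x y z. x \<in> A \<and> y \<in> A \<and> z \<in> A \<and> x \<noteq> y \<and> y \<noteq> z \<and> x \<noteq> z"
proof -
  assume "3 \<le> card A"
  then obtain B where B: "B \<subseteq> A" "card B = 3" using obtain_subset_with_card_n by metis
  then obtain x y z where "B = {x, y, z}" "x \<noteq> y" "y \<noteq> z" "x \<noteq> z" unfolding card_3_iff by blast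
  then show ?thesis using B(1) by blast
qed

lemma sum3: fixes f :: "nat \<Rightarrow> ereal" shows "(\<Sum>k=1..3. f k) = f 1 + f 2 + f 3"
proof -
  have "{1..3::nat} = {1,2,3}" by auto
  then show ?thesis by (simp add: add.assoc)
qed

theorem proposition3:
  fixes V :: "'a set" and E :: "'a set set" and c :: "'a set \<Rightarrow> real" and p :: "'a \<Rightarrow> real"
    and H :: "'a \<Rightarrow> 'a set" and s :: nat and t :: "nat \<Rightarrow> 'a" and vbar :: "nat \<Rightarrow> 'a"
    and v :: 'a and VS :: "'a set" and ES :: "'a set set"
  assumes inst: "pcstp_instance V E c p"
    and s_def: "s = card (Tp V p)" and s3: "s \<ge> 3"
    and H: "terminal_regions V E p H"
    and t_enum: "bij_betw t {1..s} (Tp V p)"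
    and t_sorted: "\<And>i j. 1 \<le> i \<Longrightarrow> i \<le> j \<Longrightarrow> j \<le> s \<Longrightarrow> rpc V E c p H (t i) \<le> rpc V E c p H (t j)"
    and v: "v \<in> V - Tp V p"
    and vbar_enum: "bij_betw vbar {1..s} (Tp V p)"
    and vbar_sorted: "\<And>i j. 1 \<le> i \<Longrightarrow> i \<le> j \<Longrightarrow> j \<le> s \<Longrightarrow> dlow V E c p v (vbar i) \<le> dlow V E c p v (vbar j)"
    and opt: "optimal_solution V E c p VS ES"
    and deg: "card {e \<in> ES. v \<in> e} \<ge> 3"
  shows "ereal (pc_cost V c p VS ES) \<ge>
           dlow V E c p v (vbar 1) + dlow V E c p v (vbar 2) + dlow V E c p v (vbar 3)
           + (\<Sum>k = 1..s - 3. rpc V E c p H (t k))"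
proof -
  have graph: "graph V E" and cpos: "\<forall>e\<in>E. c e > 0" and pnn: "\<forall>x\<in>V. p x \<ge> 0"
    using inst unfolding pcstp_instance_def by auto
  have finV: "finite V" using graph unfolding graph_def by simp
  have Eform: "\<And>e. e \<in> E \<Longrightarrow> \<exists>a b. e = {a, b} \<and> a \<noteq> b" using graph unfolding graph_def by blast
  have sub: "is_subtree V E VS ES" using opt unfolding optimal_solution_def by simp
  then have VSV: "VS \<subseteq> V" and ESE: "ES \<subseteq> E" and ESsub: "\<forall>e\<in>ES. e \<subseteq> VS"
    and conn: "connected_sub VS ES" unfolding is_subtree_def by auto
  have finVS: "finite VS" using finV VSV by (rule finite_subset[rotated])
  have finES: "finite ES"
  proof (rule finite_subset)
    show "ES \<subseteq> Pow VS" using ESsub by blast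
    show "finite (Pow VS)" using finVS by simp
  qed
  let ?Tp = "Tp V p"
  have TpV: "?Tp \<subseteq> V" unfolding Tp_def by blast
  have finTp: "finite ?Tp" using finV TpV by (rule finite_subset[rotated])
  have vV: "v \<in> V" and vTp: "v \<notin> ?Tp" using v by auto
  have vVS: "v \<in> VS"
  proof -
    have "{e \<in> ES. v \<in> e} \<noteq> {}" using deg by (metis card.empty not_numeral_le_zero)
    then obtain e where "e \<in> ES" "v \<in> e" by blast
    then show ?thesis using ESsub by blast
  qed
  obtain dep par where dp: "dep v = (0::nat)" "par v = v"
     "\<forall>u\<in>VS. u \<noteq> v \<longrightarrow> par u \<in> VS \<and> {u, par u} \<in> ES \<and> Suc (dep (par u)) = dep u"
     "\<forall>u\<in>VS. \<forall>w\<in>VS. {u, w} \<in> ES \<longrightarrow> dep u \<le> Suc (dep w)"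
    using bfs_exists[OF conn vVS] by blast
  interpret ptree VS ES v dep par
    by (unfold_locales) (use dp vVS in auto)
  define T where "T = ?Tp \<inter> VS"
  have Hreg: "\<And>t'. t' \<in> ?Tp \<Longrightarrow> H t' \<inter> ?Tp = {t'}"
    and Hdisj: "\<And>t1 t2. t1 \<in> ?Tp \<Longrightarrow> t2 \<in> ?Tp \<Longrightarrow> t1 \<noteq> t2 \<Longrightarrow> H t1 \<inter> H t2 = {}"
    using H unfolding terminal_regions_def by auto
  interpret ptreeH VS ES v dep par H T
  proof (unfold_locales)
    show "T \<subseteq> VS" unfolding T_def by blast
    show "v \<notin> T" unfolding T_def using vTp by blast
    show "\<And>t. t \<in> T \<Longrightarrow> t \<in> H t" unfolding T_def using Hreg by blast
    show "\<And>t t'. t \<in> T \<Longrightarrow> t' \<in> T \<Longrightarrow> t \<noteq> t' \<Longrightarrow> H t \<inter> H t' = {}" unfolding T_def using Hdisj by blast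
  qed
  have finT: "finite T" unfolding T_def using finTp by simp
  define Ch where "Ch = {w \<in> VS. w \<noteq> v \<and> {v, w} \<in> ES}"
  have finCh: "finite Ch" unfolding Ch_def using finVS by simp
  have Ch3: "card Ch \<ge> 3"
  proof -
    have "{e \<in> ES. v \<in> e} \<subseteq> (\<lambda>w. {v, w}) ` Ch"
    proof
      fix e assume e: "e \<in> {e \<in> ES. v \<in> e}"
      then obtain a b where ab: "e = {a, b}" "a \<noteq> b" using Eform ESE by blast
      define w where "w = (if a = v then b else a)"
      have ew: "e = {v, w}" "w \<noteq> v" using e ab unfolding w_def by auto
      have "w \<in> VS" using e ESsub ew by auto
      then have "w \<in> Ch" unfolding Ch_def using ew e by auto
      then show "e \<in> (\<lambda>w. {v, w}) ` Ch" using ew by blast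
    qed
    then have "card {e \<in> ES. v \<in> e} \<le> card ((\<lambda>w. {v, w}) ` Ch)"
      using finCh by (intro card_mono) auto
    also have "\<dots> \<le> card Ch" by (rule card_image_le[OF finCh])
    finally show ?thesis using deg by simp
  qed
  have brT: "\<exists>a\<in>T. br a = w" if w: "w \<in> Ch" for w
  proof -
    have "\<exists>t\<in>VS. t \<noteq> v \<and> br t = w \<and> t \<in> ?Tp"
      by (rule branch_has_terminal[OF opt cpos pnn finV finES]) (use w in \<open>auto simp: Ch_def\<close>)
    then show ?thesis unfolding T_def by blast
  qed
  have brCh: "br a \<in> Ch" if "a \<in> T" for a
  proof -
    have "a \<in> VS" "a \<noteq> v" using that T_sub v_notin_T by auto
    from br_child[OF this] show ?thesis unfolding Ch_def by simp
  qed

  define score where "score a = card (F a) + (if good a then 1 else (0::nat))" for a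
  have choose: "\<exists>a\<in>T. br a = w \<and> F a = {} \<and> (\<forall>t'\<in>T. \<not> good t' \<and> br t' = w \<longrightarrow> a = t')"
    if w: "w \<in> Ch" for w
  proof -
    obtain a0 where a0: "a0 \<in> T" "br a0 = w" using brT[OF w] by blast
    obtain a where a: "a \<in> T \<and> br a = w" and amin: "\<forall>y. y \<in> T \<and> br y = w \<longrightarrow> score a \<le> score y"
      using ex_has_least_nat[of "\<lambda>a. a \<in> T \<and> br a = w" a0 score] a0 by blast
    have Fa: "F a = {}"
    proof (rule ccontr)
      assume "F a \<noteq> {}"
      then obtain z where z: "z \<in> F a" by blast
      obtain t' where t': "t' \<in> T" "t' \<noteq> a" "F t' \<subseteq> F a - {z}" "br t' = br a" "good a"
        using F_dec[of a z] a z by blast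
      have "card (F t') \<le> card (F a - {z})" using t'(3) F_fin by (intro card_mono) auto
      also have "\<dots> < card (F a)" by (rule card_Diff1_less[OF F_fin z])
      finally have "score t' < score a" unfolding score_def using t'(5) by auto
      moreover have "score a \<le> score t'" using amin t' a by auto
      ultimately show False by simp
    qed
    have uniq: "a = t'" if t': "t' \<in> T" "\<not> good t'" "br t' = w" for t'
    proof -
      have "score t' = 0" using bad_F[OF t'(1,2)] t'(2) unfolding score_def by simp
      then have "score a = 0" using amin t' by force
      then have "\<not> good a" unfolding score_def by (auto split: if_splits)
      then show "a = t'" using bad_unique a t' by blast
    qed
    show ?thesis using a Fa uniq by blast
  qed
  obtain w1 w2 w3 where ws: "w1 \<in> Ch" "w2 \<in> Ch" "w3 \<in> Ch" "w1 \<noteq> w2" "w2 \<noteq> w3" "w1 \<noteq> w3"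
    and wbad: "\<forall>t'\<in>T. \<not> good t' \<longrightarrow> br t' = w1 \<or> br t' = w2 \<or> br t' = w3"
  proof (cases "\<exists>t0\<in>T. \<not> good t0")
    case True
    then obtain t0 where t0: "t0 \<in> T" "\<not> good t0" by blast
    have w1: "br t0 \<in> Ch" using brCh t0 by simp
    have "card (Ch - {br t0}) \<ge> 2" using Ch3 w1 finCh by (simp add: card_Diff_singleton)
    then obtain x y where xy: "x \<in> Ch - {br t0}" "y \<in> Ch - {br t0}" "x \<noteq> y" using two_elems by blast
    have "\<forall>t'\<in>T. \<not> good t' \<longrightarrow> br t' = br t0 \<or> br t' = x \<or> br t' = y" using bad_unique t0 by blast
    then show ?thesis using that[of "br t0" x y] w1 xy by blast
  next
    case False
    obtain x y z where "x \<in> Ch" "y \<in> Ch" "z \<in> Ch" "x \<noteq> y" "y \<noteq> z" "x \<noteq> z" using three_elems[OF Ch3] by blast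
    then show ?thesis using that[of x y z] False by blast
  qed
  obtain a1 where a1: "a1 \<in> T" "br a1 = w1" "F a1 = {}" "\<forall>t'\<in>T. \<not> good t' \<and> br t' = w1 \<longrightarrow> a1 = t'"
    using choose[OF ws(1)] by blast
  obtain a2 where a2: "a2 \<in> T" "br a2 = w2" "F a2 = {}" "\<forall>t'\<in>T. \<not> good t' \<and> br t' = w2 \<longrightarrow> a2 = t'"
    using choose[OF ws(2)] by blast
  obtain a3 where a3: "a3 \<in> T" "br a3 = w3" "F a3 = {}" "\<forall>t'\<in>T. \<not> good t' \<and> br t' = w3 \<longrightarrow> a3 = t'"
    using choose[OF ws(3)] by blast
  define A where "A = {a1, a2, a3}"
  have A_sub: "A \<subseteq> T" unfolding A_def using a1(1) a2(1) a3(1) by simp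
  have ad1: "a1 \<noteq> a2" using a1(2) a2(2) ws(4) by force
  have ad2: "a2 \<noteq> a3" using a2(2) a3(2) ws(5) by force
  have ad3: "a1 \<noteq> a3" using a1(2) a3(2) ws(6) by force
  note ad = ad1 ad2 ad3
  have cardA: "card A = 3" unfolding A_def using ad by simp
  have FA: "\<And>a. a \<in> A \<Longrightarrow> F a = {}" unfolding A_def using a1(3) a2(3) a3(3) by auto
  have brA: "\<And>a b. a \<in> A \<Longrightarrow> b \<in> A \<Longrightarrow> a \<noteq> b \<Longrightarrow> br a \<noteq> br b"
    unfolding A_def using a1(2) a2(2) a3(2) ws(4-6) by auto
  have goodO: "good t'" if t': "t' \<in> T" "t' \<notin> A" for t'
  proof (rule ccontr)
    assume b: "\<not> good t'"
    then have "br t' = w1 \<or> br t' = w2 \<or> br t' = w3" using wbad t' by blast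
    then have "t' = a1 \<or> t' = a2 \<or> t' = a3"
    proof (elim disjE)
      assume "br t' = w1" then show ?thesis using a1(4) t'(1) b by blast
    next
      assume "br t' = w2" then show ?thesis using a2(4) t'(1) b by blast
    next
      assume "br t' = w3" then show ?thesis using a3(4) t'(1) b by blast
    qed
    then show False using t'(2) unfolding A_def by blast
  qed
  define W where "W t' = (if t' \<in> A then C t' else U t')" for t'
  have WC: "W t' \<subseteq> C t'" for t' unfolding W_def using U_sub_C by auto
  have Wsub: "W t' \<subseteq> VS - {v}" if "t' \<in> T" for t'
  proof -
    have "t' \<in> VS" using that T_sub by blast
    then have "C t' \<subseteq> VS - {v}" by (rule C_sub)
    then show ?thesis using WC[of t'] by (rule subset_trans[rotated])
  qed
  have Wfin: "finite (W t')" for t' by (rule finite_subset[OF WC C_fin])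
  have Wdisj: "W t1 \<inter> W t2 = {}" if t12: "t1 \<in> T" "t2 \<in> T" "t1 \<noteq> t2" for t1 t2
  proof (cases "t1 \<in> A")
    case True
    show ?thesis
    proof (cases "t2 \<in> A")
      case True2: True
      have "t1 \<in> VS" "t2 \<in> VS" using t12 T_sub by auto
      then have "C t1 \<inter> C t2 = {}" using brA[OF True True2 t12(3)] by (rule CC_disj)
      then show ?thesis unfolding W_def using True True2 by simp
    next
      case False
      have "C t1 \<inter> U t2 = {}" using CU_disj[OF FA[OF True] t12(2)] t12(3) by blast
      then show ?thesis unfolding W_def using True False by simp
    qed
  next
    case False
    show ?thesis
    proof (cases "t2 \<in> A")
      case True2: True
      have "C t2 \<inter> U t1 = {}" using CU_disj[OF FA[OF True2] t12(1)] t12(3) by blast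
      then show ?thesis unfolding W_def using False True2 by (simp add: Int_commute)
    next
      case False2: False
      have "U t1 \<inter> U t2 = {}" using U_disj t12 by blast
      then show ?thesis unfolding W_def using False False2 by simp
    qed
  qed
  let ?X = "\<Union> (W ` T)"
  have Xsub: "?X \<subseteq> VS - {v}" using Wsub by blast
  have sumX: "(\<Sum>x\<in>?X. c {x, par x}) = (\<Sum>t'\<in>T. \<Sum>x\<in>W t'. c {x, par x})"
  proof -
    have f1: "\<forall>i\<in>T. finite (W i)" using Wfin by blast
    have f2: "\<forall>i\<in>T. \<forall>j\<in>T. i \<noteq> j \<longrightarrow> W i \<inter> W j = {}" using Wdisj by blast
    show ?thesis by (rule sum.UNION_disjoint[OF finT f1 f2])
  qed
  have cES: "\<forall>e\<in>ES. c e \<ge> 0"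
  proof
    fix e assume "e \<in> ES"
    then have "e \<in> E" using ESE by blast
    then have "c e > 0" using cpos by blast
    then show "c e \<ge> 0" by simp
  qed
  have sumE: "(\<Sum>x\<in>?X. c {x, par x}) \<le> (\<Sum>e\<in>ES. c e)"
  proof -
    have inj: "inj_on (\<lambda>x. {x, par x}) ?X" using inj_on_subset[OF edge_inj Xsub] .
    have "(\<Sum>x\<in>?X. c {x, par x}) = (\<Sum>e\<in>(\<lambda>x. {x, par x}) ` ?X. c e)"
      using sum.reindex[OF inj, of c] by (simp add: comp_def)
    also have "\<dots> \<le> (\<Sum>e\<in>ES. c e)"
    proof (rule sum_mono2[OF finES])
      show "(\<lambda>x. {x, par x}) ` ?X \<subseteq> ES"
      proof
        fix e assume "e \<in> (\<lambda>x. {x, par x}) ` ?X"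
        then obtain x where x: "x \<in> ?X" "e = {x, par x}" by blast
        then have "x \<in> VS - {v}" using Xsub by blast
        then have "x \<in> VS" "x \<noteq> v" by auto
        then show "e \<in> ES" using par_step x(2) by blast
      qed
      show "\<And>b. b \<in> ES - (\<lambda>x. {x, par x}) ` ?X \<Longrightarrow> 0 \<le> c b" using cES by blast
    qed
    finally show ?thesis .
  qed
  have sumP: "(\<Sum>x\<in>?Tp - VS. p x) \<le> (\<Sum>x\<in>V - VS. p x)"
  proof (rule sum_mono2)
    show "finite (V - VS)" using finV by simp
    show "?Tp - VS \<subseteq> V - VS" using TpV by blast
    show "\<And>b. b \<in> V - VS - (?Tp - VS) \<Longrightarrow> 0 \<le> p b" using pnn by blast
  qed
  have real_bound: "(\<Sum>t'\<in>T. \<Sum>x\<in>W t'. c {x, par x}) + (\<Sum>x\<in>?Tp - VS. p x) \<le> pc_cost V c p VS ES"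
    unfolding pc_cost_def using sumX sumE sumP by linarith
  define g where "g x = (if x \<in> A then dlow V E c p v x else rpc V E c p H x)" for x
  have gT: "g t' \<le> ereal (\<Sum>x\<in>W t'. c {x, par x})" if t': "t' \<in> T" for t'
  proof (cases "t' \<in> A")
    case True
    have "dist_in E c (V - (?Tp - {v, t'})) v t' \<le> ereal (\<Sum>x\<in>C t'. c {x, par x})"
      by (rule dlow_sum[OF t' FA[OF True] T_def vTp ESE VSV])
    then show ?thesis unfolding g_def W_def dlow_def using True by simp
  next
    case False
    have gd: "good t'" using goodO t' False by blast
    obtain x where x: "x \<in> V - H t'" "dist V E c t' x \<le> ereal (\<Sum>y\<in>U t'. c {y, par y})"
      using good_sum[OF t' gd ESE VSV] by blast
    have "rpc V E c p H t' \<le> Inf {dist V E c t' y | y. y \<in> V - H t'}"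
      unfolding rpc_def by (rule min.cobounded2)
    also have "\<dots> \<le> dist V E c t' x" by (rule Inf_lower) (use x(1) in blast)
    also have "\<dots> \<le> ereal (\<Sum>y\<in>U t'. c {y, par y})" by (rule x(2))
    finally show ?thesis unfolding g_def W_def using False by simp
  qed
  have gO: "g x \<le> ereal (p x)" if x: "x \<in> ?Tp - VS" for x
  proof -
    have "x \<notin> A" using x A_sub T_sub by blast
    then show ?thesis unfolding g_def rpc_def by simp
  qed
  have split: "sum g ?Tp = sum g T + sum g (?Tp - VS)"
  proof -
    have e: "?Tp = T \<union> (?Tp - VS)" unfolding T_def by blast
    have d: "T \<inter> (?Tp - VS) = {}" unfolding T_def by blast
    have f2: "finite (?Tp - VS)" using finTp by simp
    have "sum g (T \<union> (?Tp - VS)) = sum g T + sum g (?Tp - VS)" by (rule sum.union_disjoint[OF finT f2 d])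
    then show ?thesis using e by simp
  qed
  have "sum g ?Tp \<le> (\<Sum>t'\<in>T. ereal (\<Sum>x\<in>W t'. c {x, par x})) + (\<Sum>x\<in>?Tp - VS. ereal (p x))"
    unfolding split
  proof (rule add_mono)
    show "sum g T \<le> (\<Sum>t'\<in>T. ereal (\<Sum>x\<in>W t'. c {x, par x}))" by (rule sum_mono) (rule gT)
    show "sum g (?Tp - VS) \<le> (\<Sum>x\<in>?Tp - VS. ereal (p x))" by (rule sum_mono) (rule gO)
  qed
  also have "\<dots> = ereal ((\<Sum>t'\<in>T. \<Sum>x\<in>W t'. c {x, par x}) + (\<Sum>x\<in>?Tp - VS. p x))" by simp
  also have "\<dots> \<le> ereal (pc_cost V c p VS ES)" using real_bound by simp
  finally have gbound: "sum g ?Tp \<le> ereal (pc_cost V c p VS ES)" .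
  have ATp: "A \<subseteq> ?Tp" using A_sub unfolding T_def by blast
  have gsplit: "sum g ?Tp = sum (\<lambda>x. dlow V E c p v x) A + sum (\<lambda>x. rpc V E c p H x) (?Tp - A)"
  proof -
    have "sum g ?Tp = sum g (?Tp - A) + sum g A" by (rule sum.subset_diff[OF ATp finTp])
    moreover have "sum g A = sum (\<lambda>x. dlow V E c p v x) A" by (rule sum.cong) (auto simp: g_def)
    moreover have "sum g (?Tp - A) = sum (\<lambda>x. rpc V E c p H x) (?Tp - A)" by (rule sum.cong) (auto simp: g_def)
    ultimately show ?thesis by (simp add: add.commute)
  qed
  obtain K where K: "K \<subseteq> {1..s}" "card K = card A"
    "sum (\<lambda>x. dlow V E c p v x) A = sum ((\<lambda>x. dlow V E c p v x) \<circ> vbar) K"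
    using bij_reindex[OF vbar_enum ATp] by blast
  have d3: "dlow V E c p v (vbar 1) + dlow V E c p v (vbar 2) + dlow V E c p v (vbar 3)
      \<le> sum (\<lambda>x. dlow V E c p v x) A"
  proof -
    have "(\<Sum>k=1..card K. dlow V E c p v (vbar k)) \<le> sum (\<lambda>k. dlow V E c p v (vbar k)) K"
      by (rule sorted_sum[where f="\<lambda>k. dlow V E c p v (vbar k)" and n=s and K=K, OF vbar_sorted K(1)])
    then show ?thesis using K cardA sum3[of "\<lambda>k. dlow V E c p v (vbar k)"] by (simp add: comp_def)
  qed
  have TA: "?Tp - A \<subseteq> ?Tp" by blast
  obtain K' where K': "K' \<subseteq> {1..s}" "card K' = card (?Tp - A)"
    "sum (\<lambda>x. rpc V E c p H x) (?Tp - A) = sum ((\<lambda>x. rpc V E c p H x) \<circ> t) K'"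
    using bij_reindex[OF t_enum TA] by blast
  have finA: "finite A" unfolding A_def by simp
  have cK': "card (?Tp - A) = s - 3" using card_Diff_subset[OF finA ATp] cardA s_def by simp
  have r3: "(\<Sum>k=1..s-3. rpc V E c p H (t k)) \<le> sum (\<lambda>x. rpc V E c p H x) (?Tp - A)"
  proof -
    have "(\<Sum>k=1..card K'. rpc V E c p H (t k)) \<le> sum (\<lambda>k. rpc V E c p H (t k)) K'"
      by (rule sorted_sum[where f="\<lambda>k. rpc V E c p H (t k)" and n=s and K=K', OF t_sorted K'(1)])
    then show ?thesis using K' cK' by (simp add: comp_def)
  qed
  have "dlow V E c p v (vbar 1) + dlow V E c p v (vbar 2) + dlow V E c p v (vbar 3)
           + (\<Sum>k = 1..s - 3. rpc V E c p H (t k))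
        \<le> sum (\<lambda>x. dlow V E c p v x) A + sum (\<lambda>x. rpc V E c p H x) (?Tp - A)"
    by (rule add_mono[OF d3 r3])
  also have "\<dots> = sum g ?Tp" using gsplit by simp
  also have "\<dots> \<le> ereal (pc_cost V c p VS ES)" by (rule gbound)
  finally show ?thesis .
qed

end
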